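(* Let $\mathcal G=(\mathcal V,\mathcal E)$ be a directed graph and $\mathcal N=\{1,\dots,N\}$ a finite set of vehicles, with the deterministic platoon coordination setting described in the context (fixed travel times $\tau(e,t)\in\mathbb Z_+$, start times $\tau_0^i$, paths, finite action sets $\mathcal W^i$, reward function $R$, waiting costs $\Lambda_i$, and utilities $U^i$). Then the game $G^d=(\mathcal N,\mathcal W,\{U^i\}_{i\in\mathcal N})$ with $\mathcal W=\mathcal W^1\times\dots\times\mathcal W^N$ is an exact potential game with potential function $$\Phi(\boldsymbol w,\tau)=\sum_{t\in\mathbb Z_+}\sum_{e\in\mathcal E} r\big(|C(e,t,\boldsymbol w,\tau)|,e\big)-\sum_{i\in\mathcal N}\Lambda_i(\boldsymbol w^i),\qquad r(n,e)=\sum_{j=1}^{n}R(j,e)\ (\text{so } r(0,e)=0),$$ i.e. for every $i\in\mathcal N$, all $\boldsymbol w^{i\prime},\boldsymbol w^{i\prime\prime}\in\mathcal W^i$ and all $\boldsymbol w^{-i}\in\prod_{j\neq i}\mathcal W^j$, $$\Phi(\boldsymbol w^{i\prime},\boldsymbol w^{-i},\tau)-\Phi(\boldsymbol w^{i\prime\prime},\boldsymbol w^{-i},\tau)=U^i(\boldsymbol w^{i\prime},\boldsymbol w^{-i},\tau)-U^i(\boldsymbol w^{i\prime\prime},\boldsymbol w^{-i},\tau).$$ Consequently $G^d$ admits at least one pure Nash equilibrium, i.e. a profile $\boldsymbol w^\star\in\mathcal W$ with $U^i(\boldsymbol w^{\star i},\boldsymbol w^{\star,-i},\tau)\ge U^i(\boldsymbol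 w^i,\boldsymbol w^{\star,-i},\tau)$ for all $i$ and all $\boldsymbol w^i\in\mathcal W^i$.
   Context: Setting (deterministic platoon coordination). A road network is a directed graph $\mathcal G=(\mathcal V,\mathcal E)$; nodes are hubs where vehicles may wait. For each edge $e\in\mathcal E$ and time $t\in\mathbb Z_+$, $\tau(e,t)\in\mathbb Z_+$ is the (known) travel time on $e$ for a vehicle entering $e$ at time $t$. Each vehicle $i\in\mathcal N=\{1,\dots,N\}$ has a fixed path consisting of edges $e^i_1,\dots,e^i_{|\mathcal P^i|}$ (the set of edges being $\mathcal P^i$), where edge $e^i_k$ goes from node $v^i_k$ to node $v^i_{k+1}$, and a start time $\tau_0^i\in\mathbb Z_+$ at which it arrives at $v^i_1$. $\tau$ denotes the collection of all $\tau(e,t)$ and all $\tau^i_0$. Vehicle $i$'s action is a vector of waiting times $\boldsymbol w^i=(w^i_1,\dots,w^i_{|\mathcal P^i|})$, $w^i_k\in\mathbb Z_+$ being the waiting time at node $v^i_k$, chosen from a finite set $\mathcal W^i$; $\boldsymbol w=(\boldsymbol w^1,\dots,\boldsymbol w^N)$ and $\boldsymbol w^{-i}$ denotes the actions of all vehicles except $i$. Departure times are $t^i_1=\tau_0^i+w^i_1$ and $t^i_{k+1}=w^i_{k+1}+t^i_k+\tau(e^i_k,t^i_k)$; $t^i_k$ is the time vehicle $i$ leaves $v^i_k$ and enters $e^i_k$. For $e\in\mathcal E$, $t\in\mathbb Z_+$, let $C(e,t,\boldsymbol w,\tau)=\{i\in\mathcal N: \exists k,\ e^i_k=e,\ t^i_k=t\}$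 be the set of vehicles entering $e$ at time $t$ (they form a platoon). $R:\mathbb Z_{\ge1}\times\mathcal E\to\mathbb R$ gives the platooning reward $R(n,e)$ of each vehicle traversing $e$ in a platoon of $n$ vehicles, and $\Lambda_i:\mathcal W^i\to\mathbb R$ is vehicle $i$'s waiting cost. The utility of vehicle $i$ is $$U^i(\boldsymbol w^i,\boldsymbol w^{-i},\tau)=\sum_{k=1}^{|\mathcal P^i|}R\big(|C(e^i_k,t^i_k,\boldsymbol w,\tau)|,e^i_k\big)-\Lambda_i(\boldsymbol w^i).$$ The game $G^d$ has players $\mathcal N$, action sets $\mathcal W^i$, and payoffs $U^i(\cdot,\tau)$, each player maximizing its own payoff. *)

theory Defs
  imports "HOL-Analysis.Analysis"
begin

(* Edges of the directed graph are pairs (u,v) of nodes.  Time is nat (= Z_+).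
   Vehicles are 1..N.  Lists are 0-indexed: entry k of a list is the paper's index k+1. *)

definition is_digraph :: "'v set \<Rightarrow> ('v \<times> 'v) set \<Rightarrow> bool" where
  "is_digraph V E \<longleftrightarrow> E \<subseteq> V \<times> V"

definition is_path :: "('v \<times> 'v) set \<Rightarrow> ('v \<times> 'v) list \<Rightarrow> bool" where
  "is_path E p \<longleftrightarrow> set p \<subseteq> E \<and> distinct p \<and>
     (\<forall>k. Suc k < length p \<longrightarrow> snd (p ! k) = fst (p ! Suc k))"

(* departure times: s = arrival time at the current node;
   t_1 = tau0 + w_1,  t_{k+1} = w_{k+1} + t_k + tau(e_k, t_k) *)
fun dep_times :: "('e \<Rightarrow> nat \<Rightarrow> nat) \<Rightarrow> nat \<Rightarrow> 'e list \<Rightarrow> nat list \<Rightarrow> nat list" where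
  "dep_times tt s (e # es) (x # xs) = (let t = x + s in t # dep_times tt (t + tt e t) es xs)"
| "dep_times tt s _ _ = []"

definition dep :: "('e \<Rightarrow> nat \<Rightarrow> nat) \<Rightarrow> (nat \<Rightarrow> nat) \<Rightarrow> (nat \<Rightarrow> 'e list)
                   \<Rightarrow> (nat \<Rightarrow> nat list) \<Rightarrow> nat \<Rightarrow> nat list" where
  "dep tt tau0 pth w i = dep_times tt (tau0 i) (pth i) (w i)"

definition platoon :: "nat \<Rightarrow> ('e \<Rightarrow> nat \<Rightarrow> nat) \<Rightarrow> (nat \<Rightarrow> nat) \<Rightarrow> (nat \<Rightarrow> 'e list)
                   \<Rightarrow> 'e \<Rightarrow> nat \<Rightarrow> (nat \<Rightarrow> nat list) \<Rightarrow> nat set" where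
  "platoon N tt tau0 pth e t w =
     {i \<in> {1..N}. \<exists>k < length (pth i). pth i ! k = e \<and> dep tt tau0 pth w i ! k = t}"

definition utility :: "nat \<Rightarrow> ('e \<Rightarrow> nat \<Rightarrow> nat) \<Rightarrow> (nat \<Rightarrow> nat) \<Rightarrow> (nat \<Rightarrow> 'e list)
                   \<Rightarrow> (nat \<Rightarrow> 'e \<Rightarrow> real) \<Rightarrow> (nat \<Rightarrow> nat list \<Rightarrow> real)
                   \<Rightarrow> nat \<Rightarrow> (nat \<Rightarrow> nat list) \<Rightarrow> real" where
  "utility N tt tau0 pth R Lam i w =
     (\<Sum>k < length (pth i).
        R (card (platoon N tt tau0 pth (pth i ! k) (dep tt tau0 pth w i ! k) w)) (pth i ! k))
     - Lam i (w i)"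

definition cumR :: "(nat \<Rightarrow> 'e \<Rightarrow> real) \<Rightarrow> nat \<Rightarrow> 'e \<Rightarrow> real" where
  "cumR R n e = (\<Sum>j = 1..n. R j e)"

definition potential :: "nat \<Rightarrow> 'e set \<Rightarrow> ('e \<Rightarrow> nat \<Rightarrow> nat) \<Rightarrow> (nat \<Rightarrow> nat) \<Rightarrow> (nat \<Rightarrow> 'e list)
                   \<Rightarrow> (nat \<Rightarrow> 'e \<Rightarrow> real) \<Rightarrow> (nat \<Rightarrow> nat list \<Rightarrow> real)
                   \<Rightarrow> (nat \<Rightarrow> nat list) \<Rightarrow> real" where
  "potential N E tt tau0 pth R Lam w =
     (\<Sum>\<^sub>\<infinity> t \<in> (UNIV :: nat set). \<Sum>\<^sub>\<infinity> e \<in> E.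
         cumR R (card (platoon N tt tau0 pth e t w)) e)
     - (\<Sum>i \<in> {1..N}. Lam i (w i))"

definition exact_potential_game ::
  "nat \<Rightarrow> (nat \<Rightarrow> 'a set) \<Rightarrow> (nat \<Rightarrow> (nat \<Rightarrow> 'a) \<Rightarrow> real) \<Rightarrow> ((nat \<Rightarrow> 'a) \<Rightarrow> real) \<Rightarrow> bool" where
  "exact_potential_game N W U Phi \<longleftrightarrow>
     (\<forall>i \<in> {1..N}. \<forall>a \<in> W i. \<forall>b \<in> W i. \<forall>w \<in> Pi ({1..N} - {i}) W.
        Phi (w(i := a)) - Phi (w(i := b)) = U i (w(i := a)) - U i (w(i := b)))"

definition pure_nash_eq ::
  "nat \<Rightarrow> (nat \<Rightarrow> 'a set) \<Rightarrow> (nat \<Rightarrow> (nat \<Rightarrow> 'a) \<Rightarrow> real) \<Rightarrow> (nat \<Rightarrow> 'a) \<Rightarrow> bool" where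
  "pure_nash_eq N W U ws \<longleftrightarrow> ws \<in> Pi {1..N} W \<and>
     (\<forall>i \<in> {1..N}. \<forall>a \<in> W i. U i ws \<ge> U i (ws(i := a)))"

end

theory Submission
  imports Defs
begin

definition FEs :: "nat \<Rightarrow> (nat \<Rightarrow> 'e list) \<Rightarrow> 'e set" where
  "FEs N pth = (\<Union>j\<in>{1..N}. set (pth j))"

definition TSs :: "nat \<Rightarrow> ('e \<Rightarrow> nat \<Rightarrow> nat) \<Rightarrow> (nat \<Rightarrow> nat) \<Rightarrow> (nat \<Rightarrow> 'e list)
                   \<Rightarrow> (nat \<Rightarrow> nat list) \<Rightarrow> nat set" where
  "TSs N tt tau0 pth w = (\<Union>j\<in>{1..N}. (\<lambda>k. dep tt tau0 pth w j ! k) ` {..<length (pth j)})"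

lemma finite_FEs: "finite (FEs N pth)"
  by (simp add: FEs_def)

lemma finite_TSs: "finite (TSs N tt tau0 pth w)"
  by (simp add: TSs_def)

lemma platoon_sub:
  assumes "x \<in> platoon N tt tau0 pth e t w"
  shows "e \<in> FEs N pth \<and> t \<in> TSs N tt tau0 pth w"
  using assms unfolding platoon_def FEs_def TSs_def by (auto intro!: bexI[of _ x] nth_mem)

lemma finite_platoon: "finite (platoon N tt tau0 pth e t w)"
  unfolding platoon_def by simp

lemma cumR_zero_if: "platoon N tt tau0 pth e t w = {} \<Longrightarrow>
   cumR R (card (platoon N tt tau0 pth e t w)) e = 0"
  by (simp add: cumR_def)

lemma pot_fin:
  assumes FE: "FEs N pth \<subseteq> E" and T: "finite T" "TSs N tt tau0 pth w \<subseteq> T"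
  shows "potential N E tt tau0 pth R Lam w =
     (\<Sum>t\<in>T. \<Sum>e\<in>FEs N pth. cumR R (card (platoon N tt tau0 pth e t w)) e)
     - (\<Sum>i\<in>{1..N}. Lam i (w i))"
proof -
  have z: "cumR R (card (platoon N tt tau0 pth e t w)) e = 0"
    if "e \<notin> FEs N pth \<or> t \<notin> T" for e t
  proof -
    have "platoon N tt tau0 pth e t w = {}" using that platoon_sub[of _ N tt tau0 pth e t w] T(2) by blast
    then show ?thesis by (rule cumR_zero_if)
  qed
  have inner: "(\<Sum>\<^sub>\<infinity>e\<in>E. cumR R (card (platoon N tt tau0 pth e t w)) e)
     = (\<Sum>e\<in>FEs N pth. cumR R (card (platoon N tt tau0 pth e t w)) e)" for t
  proof -
    have "(\<Sum>\<^sub>\<infinity>e\<in>E. cumR R (card (platoon N tt tau0 pth e t w)) e)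
       = (\<Sum>\<^sub>\<infinity>e\<in>FEs N pth. cumR R (card (platoon N tt tau0 pth e t w)) e)"
      by (rule infsum_cong_neutral) (use z FE in auto)
    then show ?thesis by (simp add: infsum_finite finite_FEs)
  qed
  have outer: "(\<Sum>\<^sub>\<infinity>t\<in>(UNIV::nat set). \<Sum>e\<in>FEs N pth. cumR R (card (platoon N tt tau0 pth e t w)) e)
     = (\<Sum>\<^sub>\<infinity>t\<in>T. \<Sum>e\<in>FEs N pth. cumR R (card (platoon N tt tau0 pth e t w)) e)"
    by (rule infsum_cong_neutral) (use z in auto)
  show ?thesis unfolding potential_def inner outer using T(1) by (simp add: infsum_finite)
qed

lemma cumR_split:
  "cumR R (card (platoon N tt tau0 pth e t w)) e =
   cumR R (card (platoon N tt tau0 pth e t w - {i})) e +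
   (if i \<in> platoon N tt tau0 pth e t w then R (card (platoon N tt tau0 pth e t w)) e else 0)"
proof (cases "i \<in> platoon N tt tau0 pth e t w")
  case True
  have c: "card (platoon N tt tau0 pth e t w) = Suc (card (platoon N tt tau0 pth e t w - {i}))"
    using card_Suc_Diff1[OF finite_platoon True] by simp
  show ?thesis using True unfolding c cumR_def by simp
next
  case False
  then show ?thesis by simp
qed

lemma decomp:
  assumes i: "i \<in> {1..N}" and d: "distinct (pth i)" and T: "finite T" "TSs N tt tau0 pth w \<subseteq> T"
  shows "(\<Sum>t\<in>T. \<Sum>e\<in>FEs N pth. cumR R (card (platoon N tt tau0 pth e t w)) e) =
    (\<Sum>t\<in>T. \<Sum>e\<in>FEs N pth. cumR R (card (platoon N tt tau0 pth e t w - {i})) e) +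
    (\<Sum>k<length (pth i). R (card (platoon N tt tau0 pth (pth i ! k) (dep tt tau0 pth w i ! k) w)) (pth i ! k))"
proof -
  define C where "C = (\<lambda>e t. platoon N tt tau0 pth e t w)"
  define g where "g = (\<lambda>(t,e). if i \<in> C e t then R (card (C e t)) e else 0)"
  have "(\<Sum>t\<in>T. \<Sum>e\<in>FEs N pth. cumR R (card (C e t)) e) =
    (\<Sum>t\<in>T. \<Sum>e\<in>FEs N pth. cumR R (card (C e t - {i})) e) +
    (\<Sum>t\<in>T. \<Sum>e\<in>FEs N pth. g (t,e))"
    unfolding C_def g_def
    by (subst cumR_split[where i=i]) (simp add: sum.distrib)
  also have "(\<Sum>t\<in>T. \<Sum>e\<in>FEs N pth. g (t,e)) = (\<Sum>p\<in>T \<times> FEs N pth. g p)"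
    by (simp add: sum.cartesian_product)
  also have "\<dots> = (\<Sum>p\<in>{p \<in> T \<times> FEs N pth. i \<in> C (snd p) (fst p)}. R (card (C (snd p) (fst p))) (snd p))"
    using T(1) finite_FEs by (subst sum.inter_filter) (auto simp: g_def intro!: sum.cong)
  also have "{p \<in> T \<times> FEs N pth. i \<in> C (snd p) (fst p)} =
      (\<lambda>k. (dep tt tau0 pth w i ! k, pth i ! k)) ` {..<length (pth i)}"
  proof -
    have "k < length (pth i) \<Longrightarrow> dep tt tau0 pth w i ! k \<in> T" for k
      using T(2) i unfolding TSs_def by blast
    moreover have "k < length (pth i) \<Longrightarrow> pth i ! k \<in> FEs N pth" for k
      using i unfolding FEs_def by (auto intro!: bexI[of _ i] nth_mem)
    ultimately show ?thesis using i unfolding C_def platoon_def by fastforce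
  qed
  also have "(\<Sum>p\<in>(\<lambda>k. (dep tt tau0 pth w i ! k, pth i ! k)) ` {..<length (pth i)}.
         R (card (C (snd p) (fst p))) (snd p)) =
      (\<Sum>k<length (pth i). R (card (C (pth i ! k) (dep tt tau0 pth w i ! k))) (pth i ! k))"
  proof (subst sum.reindex)
    show "inj_on (\<lambda>k. (dep tt tau0 pth w i ! k, pth i ! k)) {..<length (pth i)}"
      using d by (auto simp: inj_on_def nth_eq_iff_index_eq)
  qed simp
  finally show ?thesis unfolding C_def .
qed

lemma pot_minus_util:
  assumes FE: "FEs N pth \<subseteq> E" and i: "i \<in> {1..N}" and d: "distinct (pth i)"
    and T: "finite T" "TSs N tt tau0 pth w \<subseteq> T"
  shows "potential N E tt tau0 pth R Lam w - utility N tt tau0 pth R Lam i w =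
    (\<Sum>t\<in>T. \<Sum>e\<in>FEs N pth. cumR R (card (platoon N tt tau0 pth e t w - {i})) e)
    - (\<Sum>j\<in>{1..N} - {i}. Lam j (w j))"
proof -
  have "(\<Sum>j\<in>{1..N}. Lam j (w j)) = Lam i (w i) + (\<Sum>j\<in>{1..N} - {i}. Lam j (w j))"
    using i by (simp add: sum.remove)
  then show ?thesis
    unfolding pot_fin[OF FE T] decomp[OF i d T] utility_def by simp
qed

lemma platoon_minus_eq:
  "platoon N tt tau0 pth e t (w(i := a)) - {i} = platoon N tt tau0 pth e t (w(i := b)) - {i}"
  unfolding platoon_def dep_def by auto

theorem theorem1:
  fixes V :: "'v set" and E :: "('v \<times> 'v) set" and N :: nat
    and tt :: "('v \<times> 'v) \<Rightarrow> nat \<Rightarrow> nat" and tau0 :: "nat \<Rightarrow> nat"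
    and pth :: "nat \<Rightarrow> ('v \<times> 'v) list" and W :: "nat \<Rightarrow> nat list set"
    and R :: "nat \<Rightarrow> ('v \<times> 'v) \<Rightarrow> real" and Lam :: "nat \<Rightarrow> nat list \<Rightarrow> real"
  assumes "is_digraph V E"
    and "\<forall>i \<in> {1..N}. is_path E (pth i)"
    and "\<forall>i \<in> {1..N}. finite (W i) \<and> W i \<noteq> {}"
    and "\<forall>i \<in> {1..N}. \<forall>a \<in> W i. length a = length (pth i)"
  shows "exact_potential_game N W (utility N tt tau0 pth R Lam)
           (potential N E tt tau0 pth R Lam)
       \<and> (\<exists>ws. pure_nash_eq N W (utility N tt tau0 pth R Lam) ws)"
proof -
  let ?U = "utility N tt tau0 pth R Lam"
  let ?P = "potential N E tt tau0 pth R Lam"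
  have FE: "FEs N pth \<subseteq> E" using assms(2) unfolding FEs_def is_path_def by auto
  have EPG: "exact_potential_game N W ?U ?P"
    unfolding exact_potential_game_def
  proof (intro ballI)
    fix i a b w
    assume i: "i \<in> {1..N}" and "a \<in> W i" "b \<in> W i" "w \<in> Pi ({1..N} - {i}) W"
    have d: "distinct (pth i)" using assms(2) i unfolding is_path_def by auto
    define T where "T = TSs N tt tau0 pth (w(i:=a)) \<union> TSs N tt tau0 pth (w(i:=b))"
    have fT: "finite T" by (simp add: T_def finite_TSs)
    have eqa: "?P (w(i:=a)) - ?U i (w(i:=a)) =
      (\<Sum>t\<in>T. \<Sum>e\<in>FEs N pth. cumR R (card (platoon N tt tau0 pth e t (w(i:=a)) - {i})) e)
       - (\<Sum>j\<in>{1..N} - {i}. Lam j ((w(i:=a)) j))"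
      by (rule pot_minus_util[OF FE i d fT]) (simp add: T_def)
    have eqb: "?P (w(i:=b)) - ?U i (w(i:=b)) =
      (\<Sum>t\<in>T. \<Sum>e\<in>FEs N pth. cumR R (card (platoon N tt tau0 pth e t (w(i:=b)) - {i})) e)
       - (\<Sum>j\<in>{1..N} - {i}. Lam j ((w(i:=b)) j))"
      by (rule pot_minus_util[OF FE i d fT]) (simp add: T_def)
    have "(\<Sum>j\<in>{1..N} - {i}. Lam j ((w(i:=a)) j)) = (\<Sum>j\<in>{1..N} - {i}. Lam j ((w(i:=b)) j))"
      by (rule sum.cong) auto
    then have "?P (w(i:=a)) - ?U i (w(i:=a)) = ?P (w(i:=b)) - ?U i (w(i:=b))"
      unfolding eqa eqb platoon_minus_eq[where a=a and b=b] by simp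
    then show "?P (w(i:=a)) - ?P (w(i:=b)) = ?U i (w(i:=a)) - ?U i (w(i:=b))" by linarith
  qed
  define A where "A = Pi\<^sub>E {1..N} W"
  have fA: "finite A" unfolding A_def using assms(3) by (intro finite_PiE) auto
  have neA: "A \<noteq> {}" unfolding A_def using assms(3) by (simp add: PiE_eq_empty_iff)
  define m where "m = Max (?P ` A)"
  have "m \<in> ?P ` A" unfolding m_def using fA neA by (intro Max_in) auto
  then obtain ws where ws: "ws \<in> A" "?P ws = m" by auto
  have mx: "?P y \<le> ?P ws" if "y \<in> A" for y
    unfolding ws(2) m_def using fA that by (intro Max_ge) auto
  have "pure_nash_eq N W ?U ws"
    unfolding pure_nash_eq_def
  proof (intro conjI ballI)
    show "ws \<in> Pi {1..N} W" using ws(1) unfolding A_def by (auto simp: PiE_def)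
    fix i a assume i: "i \<in> {1..N}" and a: "a \<in> W i"
    have wsP: "ws \<in> Pi ({1..N} - {i}) W" using ws(1) unfolding A_def by (auto simp: PiE_def)
    have "ws(i := a) \<in> A" using ws(1) i a unfolding A_def by (auto simp: PiE_def extensional_def)
    then have "?P (ws(i:=a)) \<le> ?P ws" by (rule mx)
    moreover have "ws i \<in> W i" using ws(1) i unfolding A_def by auto
    ultimately have "?P (ws(i:=ws i)) - ?P (ws(i:=a)) = ?U i (ws(i:=ws i)) - ?U i (ws(i:=a))"
      using EPG i a wsP unfolding exact_potential_game_def by blast
    moreover have "?P (ws(i:=a)) \<le> ?P (ws(i:=ws i))" using \<open>?P (ws(i:=a)) \<le> ?P ws\<close> by simp
    ultimately show "?U i ws \<ge> ?U i (ws(i:=a))" by simp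
  qed
  with EPG show ?thesis by blast
qed

end
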